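(* Let $\kappa\ge2$ and let $\psi^+$ be the rooted balanced 4-taxon tree $((a,b),(c,d))$. Then $$d_\kappa(\psi^+)=\left(\frac{\kappa^2+\kappa}{2}\right)^2-\binom{\kappa}{2}-1=\frac{\kappa(\kappa^3+2\kappa^2-\kappa+2)}{4}-1.$$ In particular this differs from the dimension $\frac{\kappa^4+\kappa}{2}-1$ for the rooted 4-taxon caterpillar, so $d_\kappa$ depends on the rooted topology and not only on the number of taxa.
   Context: For a rooted binary topological tree $\psi^+$ on $X$, $d_\kappa(\psi^+)$ is the dimension of the affine space of real $|X|$-way $\kappa\times\cdots\times\kappa$ tensors $P$ (one index per taxon) whose entries sum to 1 and such that for every $Y\subseteq X$ and every 2-clade $\{x,y\}$ of the induced rooted subtree $\psi^+|_Y$, the marginalization $P_Y$ is invariant under exchanging the $x$ and $y$ indices. A 2-clade is a pair of leaves that are exactly the leaf descendants of some vertex. *)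

theory Defs
  imports "HOL-Analysis.Analysis" "HOL-Library.Function_Algebras"
begin

text \<open>Taxa are encoded as positions 0..n-1; a real n-way kappa x ... x kappa
tensor is a function on index lists (length n, entries < kappa) that vanishes
on all other lists.\<close>

definition idx_tuples :: "nat \<Rightarrow> nat \<Rightarrow> nat list set" where
  "idx_tuples k n = {xs. length xs = n \<and> set xs \<subseteq> {..<k}}"

definition tensors :: "nat \<Rightarrow> nat \<Rightarrow> (nat list \<Rightarrow> real) set" where
  "tensors k n = {P. \<forall>xs. xs \<notin> idx_tuples k n \<longrightarrow> P xs = 0}"

text \<open>Marginalization onto the taxa in Y, viewed as a function of a full index
tuple w (it only depends on the coordinates of w in Y).\<close>

definition marg :: "nat \<Rightarrow> nat \<Rightarrow> nat set \<Rightarrow> (nat list \<Rightarrow> real) \<Rightarrow> nat list \<Rightarrow> real" where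
  "marg k n Y P w = (\<Sum>v \<in> {v \<in> idx_tuples k n. \<forall>i\<in>Y. v ! i = w ! i}. P v)"

definition swap_idx :: "nat \<Rightarrow> nat \<Rightarrow> nat list \<Rightarrow> nat list" where
  "swap_idx x y w = w[x := w ! y, y := w ! x]"

text \<open>A rooted X-tree (X = {0..<n}) is represented by its cluster system: the
leaf-descendant sets of its vertices. The clusters of the induced rooted subtree
on Y are the nonempty sets C \<inter> Y; its 2-clades are those of cardinality 2.\<close>

definition two_clades :: "nat set set \<Rightarrow> nat set \<Rightarrow> nat set set" where
  "two_clades H Y = {S. \<exists>C\<in>H. S = C \<inter> Y \<and> card S = 2}"

definition model_space :: "nat \<Rightarrow> nat \<Rightarrow> nat set set \<Rightarrow> (nat list \<Rightarrow> real) set" where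
  "model_space k n H = {P \<in> tensors k n.
      (\<Sum>xs\<in>idx_tuples k n. P xs) = 1 \<and>
      (\<forall>Y \<subseteq> {..<n}. \<forall>x y. {x, y} \<in> two_clades H Y \<longrightarrow>
          (\<forall>w \<in> idx_tuples k n. marg k n Y P w = marg k n Y P (swap_idx x y w)))}"

definition fscale :: "real \<Rightarrow> ('a \<Rightarrow> real) \<Rightarrow> ('a \<Rightarrow> real)" where
  "fscale c f = (\<lambda>x. c * f x)"

definition affine_dim :: "('a \<Rightarrow> real) set \<Rightarrow> nat" where
  "affine_dim A = vector_space.dim fscale {p - q | p q. p \<in> A \<and> q \<in> A}"

definition d_kappa :: "nat \<Rightarrow> nat \<Rightarrow> nat set set \<Rightarrow> nat" where
  "d_kappa k n H = affine_dim (model_space k n H)"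

text \<open>The balanced rooted 4-taxon tree ((a,b),(c,d)) with a=0, b=1, c=2, d=3.\<close>

definition balanced4 :: "nat set set" where
  "balanced4 = {{0}, {1}, {2}, {3}, {0,1}, {2,3}, {0,1,2,3}}"

end

theory Submission
  imports Defs
begin


lemma sum_fun_apply: "(sum f A) x = (\<Sum>a\<in>A. f a x)"
  by (induction A rule: infinite_finite_induct) auto

interpretation fs: vector_space "fscale :: real \<Rightarrow> ('a \<Rightarrow> real) \<Rightarrow> _"
  by unfold_locales (auto simp: fscale_def fun_eq_iff algebra_simps)

lemma pivot_dim:
  fixes L :: "('a \<Rightarrow> real) set" and Pi :: "'a set" and e :: "'a \<Rightarrow> 'a \<Rightarrow> real"
  assumes sub: "fs.subspace L" and fin: "finite Pi"
    and inj0: "\<And>g. g \<in> L \<Longrightarrow> (\<forall>p\<in>Pi. g p = 0) \<Longrightarrow> g = 0"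
    and eL: "\<And>p. p \<in> Pi \<Longrightarrow> e p \<in> L"
    and ev: "\<And>p q. p \<in> Pi \<Longrightarrow> q \<in> Pi \<Longrightarrow> e p q = (if p = q then 1 else 0)"
    and D: "D \<subseteq> L" "e ` Pi \<subseteq> D"
  shows "fs.dim D = card Pi"
proof -
  have inj: "inj_on e Pi"
    by (rule inj_onI) (metis ev zero_neq_one)
  have ind: "fs.independent (e ` Pi)"
  proof (rule fs.independent_if_scalars_zero)
    show "finite (e ` Pi)" using fin by simp
    fix f x assume s: "(\<Sum>x\<in>e ` Pi. fscale (f x) x) = 0" and x: "x \<in> e ` Pi"
    then obtain p where p: "p \<in> Pi" "x = e p" by auto
    have "0 = (\<Sum>x\<in>e ` Pi. fscale (f x) x) p" using s by simp
    also have "\<dots> = (\<Sum>q\<in>Pi. f (e q) * e q p)"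
      by (simp add: sum_fun_apply fscale_def sum.reindex[OF inj])
    also have "\<dots> = (\<Sum>q\<in>Pi. if q = p then f (e q) else 0)"
      by (rule sum.cong) (auto simp: ev p)
    also have "\<dots> = f x" using p fin by simp
    finally show "f x = 0" by simp
  qed
  have spanL: "L \<subseteq> fs.span (e ` Pi)"
  proof
    fix g assume g: "g \<in> L"
    let ?s = "\<Sum>q\<in>Pi. fscale (g q) (e q)"
    have sL: "?s \<in> L" by (rule fs.subspace_sum[OF sub]) (auto intro: fs.subspace_scale[OF sub] eL)
    have "g - ?s \<in> L" using fs.subspace_diff[OF sub g sL] .
    moreover have "\<forall>p\<in>Pi. (g - ?s) p = 0"
    proof
      fix p assume p: "p \<in> Pi"
      have "?s p = (\<Sum>q\<in>Pi. if q = p then g q else 0)"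
        by (simp add: sum_fun_apply fscale_def) (rule sum.cong, auto simp: ev p)
      then show "(g - ?s) p = 0" using p fin by simp
    qed
    ultimately have "g = ?s" using inj0 by fastforce
    also have "\<dots> \<in> fs.span (e ` Pi)"
      by (intro fs.span_sum fs.span_scale fs.span_base) auto
    finally show "g \<in> fs.span (e ` Pi)" .
  qed
  have "fs.span (e ` Pi) = fs.span D"
  proof
    show "fs.span (e ` Pi) \<subseteq> fs.span D" using D(2) by (rule fs.span_mono)
    show "fs.span D \<subseteq> fs.span (e ` Pi)"
      using D(1) spanL by (intro fs.span_minimal) (auto intro: fs.subspace_span)
  qed
  then have "fs.dim D = card (e ` Pi)" using fs.dim_eq_card ind by metis
  then show ?thesis using card_image[OF inj] by simp
qed



abbreviation "I k \<equiv> idx_tuples k 4"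

lemma finite_idx: "finite (idx_tuples k n)"
proof -
  have "idx_tuples k n = {xs. set xs \<subseteq> {..<k} \<and> length xs = n}" by (auto simp: idx_tuples_def)
  then show ?thesis using finite_lists_length_eq[of "{..<k}" n] by simp
qed

lemma len4: "length v = 4 \<Longrightarrow> v = [v!0, v!1, v!2, v!3]"
  by (rule nth_equalityI) (auto simp: less_Suc_eq numeral_eq_Suc)

lemma idx4: "v \<in> I k \<longleftrightarrow> (\<exists>a b c d. v = [a,b,c,d] \<and> a<k \<and> b<k \<and> c<k \<and> d<k)"
proof
  assume "v \<in> I k"
  then have "length v = 4" "set v \<subseteq> {..<k}" by (auto simp: idx_tuples_def)
  then show "\<exists>a b c d. v = [a,b,c,d] \<and> a<k \<and> b<k \<and> c<k \<and> d<k"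
    using len4 by (metis insert_subset lessThan_iff list.simps(15))
qed (auto simp: idx_tuples_def)

lemma idx4_cases: assumes "v \<in> I k" obtains a b c d where "v = [a,b,c,d]" "a<k" "b<k" "c<k" "d<k"
  using assms idx4 by blast

lemma idx4_mem[simp]: "[a,b,c,d] \<in> I k \<longleftrightarrow> a<k \<and> b<k \<and> c<k \<and> d<k"
  by (auto simp: idx_tuples_def)

lemma swap_comm: "swap_idx x y w = swap_idx y x w"
  by (cases "x = y") (auto simp: swap_idx_def list_update_swap)

lemma swap_idx_I: "v \<in> idx_tuples k n \<Longrightarrow> x < n \<Longrightarrow> y < n \<Longrightarrow> swap_idx x y v \<in> idx_tuples k n"
  by (auto simp: idx_tuples_def swap_idx_def dest!: set_update_subset_insert[THEN subsetD])

lemma swap_swap: "x < length v \<Longrightarrow> y < length v \<Longrightarrow> swap_idx x y (swap_idx x y v) = v"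
  by (rule nth_equalityI) (auto simp: swap_idx_def nth_list_update)

lemma nth_swap: "i < length v \<Longrightarrow> x < length v \<Longrightarrow> y < length v \<Longrightarrow>
   swap_idx x y v ! i = v ! (if i = x then y else if i = y then x else i)"
  by (auto simp: swap_idx_def nth_list_update)

lemma sum_swap:
  assumes "x < n" "y < n" "\<forall>v\<in>idx_tuples k n. P (swap_idx x y v) = P v"
  shows "sum P {v\<in>idx_tuples k n. Q v} = sum P {v\<in>idx_tuples k n. Q (swap_idx x y v)}"
proof -
  have l: "\<And>v. v \<in> idx_tuples k n \<Longrightarrow> length v = n" by (auto simp: idx_tuples_def)
  show ?thesis
    by (rule sum.reindex_bij_witness[where i="swap_idx x y" and j="swap_idx x y"])
       (use assms swap_swap l swap_idx_I in auto)
qed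

lemma marg_swap:
  assumes "x < n" "y < n" "x \<in> Y" "y \<in> Y" "\<forall>v\<in>idx_tuples k n. P (swap_idx x y v) = P v"
    and w: "length w = n"
  shows "marg k n Y P w = marg k n Y P (swap_idx x y w)"
proof -
  have "marg k n Y P (swap_idx x y w) = sum P {v\<in>idx_tuples k n. \<forall>i\<in>Y. swap_idx x y v ! i = swap_idx x y w ! i}"
    unfolding marg_def by (rule sum_swap[OF assms(1,2,5)])
  also have "\<dots> = marg k n Y P w" unfolding marg_def
  proof (rule sum.cong[OF Collect_cong refl])
    fix v
    have "(\<forall>i\<in>Y. swap_idx x y v ! i = swap_idx x y w ! i) = (\<forall>i\<in>Y. v ! i = w ! i)" if vI: "v \<in> idx_tuples k n"
    proof
      have l: "length v = n" using vI by (auto simp: idx_tuples_def)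
      assume h: "\<forall>i\<in>Y. swap_idx x y v ! i = swap_idx x y w ! i"
      show "\<forall>i\<in>Y. v ! i = w ! i"
      proof
        fix i assume i: "i \<in> Y"
        show "v ! i = w ! i"
        proof (cases "i < n")
          case True
          let ?j = "if i = x then y else if i = y then x else i"
          have "?j \<in> Y" "?j < n" using i assms True by auto
          then have "swap_idx x y v ! ?j = swap_idx x y w ! ?j" using h by blast
          then show ?thesis using nth_swap[of ?j v x y] nth_swap[of ?j w x y] l w assms True
            by (auto split: if_splits)
        next
          case False
          then show ?thesis using h i l w unfolding swap_idx_def
            by (metis length_list_update nth_list_update_neq not_less assms(1,2) less_le_trans)
        qed
      qed
    next
      have l: "length v = n" using vI by (auto simp: idx_tuples_def)
      assume h: "\<forall>i\<in>Y. v ! i = w ! i"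
      show "\<forall>i\<in>Y. swap_idx x y v ! i = swap_idx x y w ! i"
      proof
        fix i assume i: "i \<in> Y"
        show "swap_idx x y v ! i = swap_idx x y w ! i"
        proof (cases "i < n")
          case True
          then show ?thesis using nth_swap[of i v x y] nth_swap[of i w x y] l w assms h i by auto
        next
          case False
          then show ?thesis using h i l w unfolding swap_idx_def
            by (metis nth_list_update_neq not_less assms(1,2) less_le_trans)
        qed
      qed
    qed
    then show "(v \<in> idx_tuples k n \<and> (\<forall>i\<in>Y. swap_idx x y v ! i = swap_idx x y w ! i)) = (v \<in> idx_tuples k n \<and> (\<forall>i\<in>Y. v ! i = w ! i))" by blast
  qed
  finally show ?thesis by simp
qed



definition Mm :: "nat \<Rightarrow> (nat list \<Rightarrow> real) \<Rightarrow> nat \<Rightarrow> nat \<Rightarrow> real" where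
  "Mm k P a c = sum P {v\<in>I k. v!0 = a \<and> v!2 = c}"

definition Csp :: "nat \<Rightarrow> real \<Rightarrow> (nat list \<Rightarrow> real) \<Rightarrow> bool" where
  "Csp k s P \<longleftrightarrow> P \<in> tensors k 4 \<and> sum P (I k) = s
     \<and> (\<forall>v\<in>I k. P (swap_idx 0 1 v) = P v) \<and> (\<forall>v\<in>I k. P (swap_idx 2 3 v) = P v)
     \<and> (\<forall>a<k. \<forall>c<k. Mm k P a c = Mm k P c a)"

lemma sum_swap':
  assumes "x < 4" "y < 4" "\<forall>v\<in>I k. P (swap_idx x y v) = P v"
    and "\<And>v. v \<in> I k \<Longrightarrow> Q (swap_idx x y v) = Q' v"
  shows "sum P {v\<in>I k. Q v} = sum P {v\<in>I k. Q' v}"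
  using sum_swap[OF assms(1-3), of Q] assms(4) by (metis (mono_tags, lifting) Collect_cong)

lemma swap01[simp]: "swap_idx 0 1 [a,b,c,d] = [b,a,c,d]" by (simp add: swap_idx_def)
lemma swap23[simp]: "swap_idx 2 3 [a,b,c,d] = [a,b,d,c]" by (simp add: swap_idx_def numeral_eq_Suc)
lemma swap01'[simp]: "swap_idx 0 (Suc 0) [a,b,c,d] = [b,a,c,d]" by (simp add: swap_idx_def)
lemma swap12'[simp]: "swap_idx (Suc 0) 2 [a,b,c,d] = [a,c,b,d]" by (simp add: swap_idx_def numeral_eq_Suc)
lemma swap13'[simp]: "swap_idx (Suc 0) 3 [a,b,c,d] = [a,d,c,b]" by (simp add: swap_idx_def numeral_eq_Suc)
lemma swap02[simp]: "swap_idx 0 2 [a,b,c,d] = [c,b,a,d]" by (simp add: swap_idx_def numeral_eq_Suc)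
lemma swap03[simp]: "swap_idx 0 3 [a,b,c,d] = [d,b,c,a]" by (simp add: swap_idx_def numeral_eq_Suc)
lemma swap12[simp]: "swap_idx 1 2 [a,b,c,d] = [a,c,b,d]" by (simp add: swap_idx_def numeral_eq_Suc)
lemma swap13[simp]: "swap_idx 1 3 [a,b,c,d] = [a,d,c,b]" by (simp add: swap_idx_def numeral_eq_Suc)

lemma marg_full: assumes "w \<in> I k" shows "marg k 4 {0,1,2,3} P w = P w"
proof -
  have "{v\<in>I k. \<forall>i\<in>{0,1,2,3}. v ! i = w ! i} = {w}"
    using assms by (auto elim!: idx4_cases)
  then show ?thesis by (simp add: marg_def)
qed

lemma marg_cross:
  assumes "x \<in> {0,1}" "y \<in> {2,3}" "\<forall>v\<in>I k. P (swap_idx 0 1 v) = P v" "\<forall>v\<in>I k. P (swap_idx 2 3 v) = P v"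
  shows "marg k 4 {x,y} P w = Mm k P (w!x) (w!y)"
proof -
  have m: "marg k 4 {x,y} P w = sum P {v\<in>I k. v!x = w!x \<and> v!y = w!y}"
    by (simp add: marg_def)
  have a: "sum P {v\<in>I k. v!Suc 0 = \<alpha> \<and> v!c = \<beta>} = sum P {v\<in>I k. v!0 = \<alpha> \<and> v!c = \<beta>}" if "c \<in> {2,3}" for \<alpha> \<beta> c
    by (rule sum_swap'[of 0 1]) (use assms that in \<open>auto elim!: idx4_cases\<close>)
  have b: "sum P {v\<in>I k. v!0 = \<alpha> \<and> v!3 = \<beta>} = sum P {v\<in>I k. v!0 = \<alpha> \<and> v!2 = \<beta>}" for \<alpha> \<beta>
    by (rule sum_swap'[of 2 3]) (use assms in \<open>auto elim!: idx4_cases\<close>)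
  show ?thesis using assms(1,2) unfolding m Mm_def
    by (auto simp: a b)
qed

lemma swap_nth_w: assumes "w \<in> I k" "x < 4" "y < 4"
  shows "swap_idx x y w ! x = w ! y" "swap_idx x y w ! y = w ! x"
  using assms nth_swap[of x w x y] nth_swap[of y w x y] by (auto simp: idx_tuples_def)

lemma pair_sym:
  assumes xy: "x < 4" "y < 4" "x \<noteq> y" and w: "w \<in> I k"
    and s01: "\<forall>v\<in>I k. P (swap_idx 0 1 v) = P v" and s23: "\<forall>v\<in>I k. P (swap_idx 2 3 v) = P v"
    and ms: "\<forall>a<k. \<forall>c<k. Mm k P a c = Mm k P c a"
  shows "marg k 4 {x,y} P w = marg k 4 {x,y} P (swap_idx x y w)"
proof -
  have lw: "length w = 4" using w by (auto simp: idx_tuples_def)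
  have wk: "w ! i < k" if "i < 4" for i
  proof -
    have "length w = 4" "set w \<subseteq> {..<k}" using w by (auto simp: idx_tuples_def)
    moreover have "i < length w" using that \<open>length w = 4\<close> by simp
    ultimately have "w ! i \<in> {..<k}" using nth_mem[of i w] by blast
    then show ?thesis by simp
  qed
  have cross: "marg k 4 {x',y'} P w = marg k 4 {x',y'} P (swap_idx x' y' w)"
    if c: "x' \<in> {0,1}" "y' \<in> {2,3}" for x' y'
  proof -
    have "x' < 4" "y' < 4" using c by auto
    then have "swap_idx x' y' w ! x' = w ! y'" "swap_idx x' y' w ! y' = w ! x'"
      using swap_nth_w[OF w] by auto
    then have "marg k 4 {x',y'} P (swap_idx x' y' w) = Mm k P (w!y') (w!x')"
      using marg_cross[OF c s01 s23, of "swap_idx x' y' w"] by simp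
    moreover have "Mm k P (w!y') (w!x') = Mm k P (w!x') (w!y')"
      using ms wk \<open>x' < 4\<close> \<open>y' < 4\<close> by blast
    ultimately show ?thesis using marg_cross[OF c s01 s23, of w] by simp
  qed
  have s10: "\<forall>v\<in>I k. P (swap_idx 1 0 v) = P v" using s01 swap_comm[of 1 0] by simp
  have s32: "\<forall>v\<in>I k. P (swap_idx 3 2 v) = P v" using s23 swap_comm[of 3 2] by simp
  consider "x = 0 \<and> y = 1" | "x = 1 \<and> y = 0" | "x = 2 \<and> y = 3" | "x = 3 \<and> y = 2"
    | "x \<in> {0,1} \<and> y \<in> {2,3}" | "y \<in> {0,1} \<and> x \<in> {2,3}"
  proof -
    have X: "x = 0 \<or> x = 1 \<or> x = 2 \<or> x = 3" using xy(1) by auto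
    have Y: "y = 0 \<or> y = 1 \<or> y = 2 \<or> y = 3" using xy(2) by auto
    show ?thesis using X Y xy(3) that by blast
  qed
  then show ?thesis
  proof cases
    case 1 then show ?thesis using marg_swap[OF _ _ _ _ s01 lw] by simp
  next
    case 2 then show ?thesis using marg_swap[OF _ _ _ _ s10 lw] by simp
  next
    case 3 then show ?thesis using marg_swap[OF _ _ _ _ s23 lw] by simp
  next
    case 4 then show ?thesis using marg_swap[OF _ _ _ _ s32 lw] by simp
  next
    case 5 then show ?thesis using cross by blast
  next
    case 6
    then have h: "marg k 4 {y,x} P w = marg k 4 {y,x} P (swap_idx y x w)" using cross[of y x] by blast
    have e1: "{x,y} = {y,x}" by blast
    have e2: "swap_idx x y w = swap_idx y x w" by (rule swap_comm)
    show ?thesis unfolding e1 e2 by (rule h)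
  qed
qed

lemma bal_clade:
  assumes Y: "Y \<subseteq> {..<4}" and c: "{x,y} \<in> two_clades balanced4 Y"
  shows "x < 4 \<and> y < 4 \<and> x \<noteq> y \<and> (Y = {x,y} \<or> {x,y} = {0,1} \<and> {0,1} \<subseteq> Y \<or> {x,y} = {2,3} \<and> {2,3} \<subseteq> Y)"
proof -
  obtain C where C: "C \<in> balanced4" "{x,y} = C \<inter> Y" "card {x,y} = 2"
    using c by (auto simp: two_clades_def)
  have ne: "x \<noteq> y" using C(3) by (cases "x = y") auto
  have "x \<in> Y" "y \<in> Y" using C(2) by auto
  then have lt: "x < 4" "y < 4" using Y by auto
  have xyY: "x \<in> C" "y \<in> C" "{x,y} \<subseteq> Y" using C(2) by auto
  have Y4: "Y \<subseteq> {0,1,2,3}"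
  proof
    fix i assume "i \<in> Y"
    then have "i < 4" using Y by auto
    then show "i \<in> {0,1,2,3}" by (auto simp: numeral_eq_Suc less_Suc_eq)
  qed
  have "C = {0} \<or> C = {1} \<or> C = {2} \<or> C = {3} \<or> C = {0,1} \<or> C = {2,3} \<or> C = {0,1,2,3}"
    using C(1) by (simp add: balanced4_def)
  then have "Y = {x,y} \<or> {x,y} = {0,1} \<and> {0,1} \<subseteq> Y \<or> {x,y} = {2,3} \<and> {2,3} \<subseteq> Y"
  proof -
    have s: False if "C = {i}" for i using that xyY ne by blast
    have c1: ?thesis if "C = {0,1,2,3}"
    proof -
      have "C \<inter> Y = Y" using Y4 that by blast
      then show ?thesis using C(2) by blast
    qed
    have c2: ?thesis if "C = {0,1}"
    proof -
      have "x = 0 \<or> x = 1" "y = 0 \<or> y = 1" using xyY that by auto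
      then have "{x,y} = {0,1}" using ne by auto
      then show ?thesis using xyY by blast
    qed
    have c3: ?thesis if "C = {2,3}"
    proof -
      have "x = 2 \<or> x = 3" "y = 2 \<or> y = 3" using xyY that by auto
      then have "{x,y} = {2,3}" using ne by auto
      then show ?thesis using xyY by blast
    qed
    show ?thesis using \<open>C = {0} \<or> _\<close> s[of 0] s[of 1] s[of 2] s[of 3] c1 c2 c3 by argo
  qed
  then show ?thesis using lt ne by blast
qed




lemma marg02: "marg k 4 {0,2} P w = Mm k P (w!0) (w!2)"
  by (simp add: marg_def Mm_def)

lemma clade01: "{0,1} \<in> two_clades balanced4 {0,1,2,3}"
  unfolding two_clades_def balanced4_def by (rule CollectI, rule bexI[of _ "{0,1}"]) auto
lemma clade23: "{2,3} \<in> two_clades balanced4 {0,1,2,3}"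
  unfolding two_clades_def balanced4_def by (rule CollectI, rule bexI[of _ "{2,3}"]) auto
lemma clade02: "{0,2} \<in> two_clades balanced4 {0,2}"
  unfolding two_clades_def balanced4_def by (rule CollectI, rule bexI[of _ "{0,1,2,3}"]) auto

lemma cons_iff:
  "(\<forall>Y \<subseteq> {..<4}. \<forall>x y. {x, y} \<in> two_clades balanced4 Y \<longrightarrow>
      (\<forall>w \<in> I k. marg k 4 Y P w = marg k 4 Y P (swap_idx x y w)))
   \<longleftrightarrow> (\<forall>v\<in>I k. P (swap_idx 0 1 v) = P v) \<and> (\<forall>v\<in>I k. P (swap_idx 2 3 v) = P v)
     \<and> (\<forall>a<k. \<forall>c<k. Mm k P a c = Mm k P c a)" (is "?L \<longleftrightarrow> ?R")
proof
  assume L: ?L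
  have Y4: "{0,1,2,3} \<subseteq> {..<4::nat}" "{0,2} \<subseteq> {..<4::nat}" by auto
  have s: "\<forall>v\<in>I k. P (swap_idx x y v) = P v" if "{x,y} \<in> two_clades balanced4 {0,1,2,3}" "x < 4" "y < 4" for x y
  proof
    fix v assume v: "v \<in> I k"
    have "marg k 4 {0,1,2,3} P v = marg k 4 {0,1,2,3} P (swap_idx x y v)"
      using L[rule_format, OF Y4(1) that(1) v] .
    then show "P (swap_idx x y v) = P v"
      using marg_full[OF v, of P] marg_full[OF swap_idx_I[OF v that(2,3)], of P] by linarith
  qed
  have m: "Mm k P a c = Mm k P c a" if "a < k" "c < k" for a c
  proof -
    have w: "[a,a,c,c] \<in> I k" using that by simp
    have "marg k 4 {0,2} P [a,a,c,c] = marg k 4 {0,2} P (swap_idx 0 2 [a,a,c,c])"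
      using L[rule_format, OF Y4(2) clade02 w] .
    then show ?thesis by (simp add: marg02)
  qed
  have "\<forall>v\<in>I k. P (swap_idx 0 1 v) = P v" using s[OF clade01] by simp
  moreover have "\<forall>v\<in>I k. P (swap_idx 2 3 v) = P v" using s[OF clade23] by simp
  ultimately show ?R using m by blast
next
  assume R: ?R
  then have s01: "\<forall>v\<in>I k. P (swap_idx 0 1 v) = P v" and s23: "\<forall>v\<in>I k. P (swap_idx 2 3 v) = P v"
    and ms: "\<forall>a<k. \<forall>c<k. Mm k P a c = Mm k P c a" by auto
  have s10: "\<forall>v\<in>I k. P (swap_idx 1 0 v) = P v" using s01 swap_comm[of 1 0] by simp
  have s32: "\<forall>v\<in>I k. P (swap_idx 3 2 v) = P v" using s23 swap_comm[of 3 2] by simp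
  show ?L
  proof (intro allI impI ballI)
    fix Y x y w assume Y: "Y \<subseteq> {..<4}" and c: "{x,y} \<in> two_clades balanced4 Y" and w: "w \<in> I k"
    have lw: "length w = 4" using w by (auto simp: idx_tuples_def)
    note b = bal_clade[OF Y c]
    then consider "Y = {x,y}" | "{x,y} = {0,1}" "{0,1} \<subseteq> Y" | "{x,y} = {2,3}" "{2,3} \<subseteq> Y"
      using b[THEN conjunct2, THEN conjunct2, THEN conjunct2] by argo
    then show "marg k 4 Y P w = marg k 4 Y P (swap_idx x y w)"
    proof cases
      case 1
      have "marg k 4 {x,y} P w = marg k 4 {x,y} P (swap_idx x y w)"
        by (rule pair_sym[OF _ _ _ w s01 s23 ms]) (use b in auto)
      then show ?thesis using 1 by simp
    next
      case 2
      then have "x = 0 \<and> y = 1 \<or> x = 1 \<and> y = 0" using doubleton_eq_iff by metis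
      moreover have Ya: "0 \<in> Y" "1 \<in> Y" using 2(2) by auto
      ultimately show ?thesis
      proof (elim disjE conjE)
        assume "x = 0" "y = 1"
        then show ?thesis using marg_swap[of 0 4 1 Y k P w, OF _ _ Ya(1) Ya(2) s01 lw] by simp
      next
        assume "x = 1" "y = 0"
        then show ?thesis using marg_swap[of 1 4 0 Y k P w, OF _ _ Ya(2) Ya(1) s10 lw] by simp
      qed
    next
      case 3
      then have "x = 2 \<and> y = 3 \<or> x = 3 \<and> y = 2" using doubleton_eq_iff by metis
      moreover have Ya: "2 \<in> Y" "3 \<in> Y" using 3(2) by auto
      ultimately show ?thesis
      proof (elim disjE conjE)
        assume "x = 2" "y = 3"
        then show ?thesis using marg_swap[of 2 4 3 Y k P w, OF _ _ Ya(1) Ya(2) s23 lw] by simp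
      next
        assume "x = 3" "y = 2"
        then show ?thesis using marg_swap[of 3 4 2 Y k P w, OF _ _ Ya(2) Ya(1) s32 lw] by simp
      qed
    qed
  qed
qed

lemma model_eq: "model_space k 4 balanced4 = {P. Csp k 1 P}"
proof (rule set_eqI)
  fix P
  show "P \<in> model_space k 4 balanced4 \<longleftrightarrow> P \<in> {P. Csp k 1 P}"
    unfolding model_space_def Csp_def mem_Collect_eq using cons_iff[of k P] by argo
qed



lemma finite_idx_sub[simp]: "finite {v\<in>idx_tuples k n. Q v}"
  by (rule finite_subset[OF _ finite_idx[of k n]]) auto

lemma Mm_add: "Mm k (P + Q) a c = Mm k P a c + Mm k Q a c"
  by (simp add: Mm_def sum.distrib)
lemma Mm_scale: "Mm k (fscale r P) a c = r * Mm k P a c"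
  by (simp add: Mm_def fscale_def sum_distrib_left)

lemma Csp_add: "Csp k s P \<Longrightarrow> Csp k t Q \<Longrightarrow> Csp k (s + t) (P + Q)"
  unfolding Csp_def tensors_def by (simp add: sum.distrib Mm_add)

lemma Csp_scale: "Csp k s P \<Longrightarrow> Csp k (r * s) (fscale r P)"
  unfolding Csp_def tensors_def by (simp add: fscale_def sum_distrib_left[symmetric] Mm_scale[unfolded fscale_def])

lemma Csp_zero: "Csp k 0 0"
  unfolding Csp_def tensors_def by (simp add: Mm_def)

lemma Csp_diff: assumes "Csp k s P" "Csp k t Q" shows "Csp k (s - t) (P - Q)"
proof -
  have "Csp k (s + (-1) * t) (P + fscale (-1) Q)" by (rule Csp_add[OF assms(1) Csp_scale[OF assms(2)]])
  moreover have "P + fscale (-1) Q = P - Q" by (simp add: fscale_def fun_eq_iff)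
  ultimately show ?thesis by simp
qed

lemma L_subspace: "fs.subspace {g. Csp k 0 g}"
  unfolding fs.subspace_def using Csp_zero Csp_add[of k 0 _ 0] Csp_scale[of k 0] by auto

definition Z :: "nat list" where "Z = [0,0,0,0]"
definition dZ :: "nat list \<Rightarrow> real" where "dZ v = (if v = Z then 1 else 0)"

lemma Z_I: "0 < k \<Longrightarrow> Z \<in> I k" by (simp add: Z_def)

lemma Csp_dZ: assumes "0 < k" shows "Csp k 1 dZ"
proof -
  have t: "dZ \<in> tensors k 4" using Z_I[OF assms] by (auto simp: tensors_def dZ_def)
  have s: "sum dZ (I k) = 1" using Z_I[OF assms] finite_idx[of k 4]
    by (simp add: dZ_def sum.delta')
  have s1: "\<forall>v\<in>I k. dZ (swap_idx 0 1 v) = dZ v" by (auto elim!: idx4_cases simp: dZ_def Z_def)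
  have s2: "\<forall>v\<in>I k. dZ (swap_idx 2 3 v) = dZ v" by (auto elim!: idx4_cases simp: dZ_def Z_def)
  have m: "Mm k dZ a c = (if a = 0 \<and> c = 0 then 1 else 0)" for a c
  proof -
    have "Mm k dZ a c = (\<Sum>v\<in>{v\<in>I k. v!0 = a \<and> v!2 = c}. if v = Z then 1 else 0)"
      by (simp add: Mm_def dZ_def)
    also have "\<dots> = (if Z \<in> {v\<in>I k. v!0 = a \<and> v!2 = c} then 1 else 0)"
      by (rule sum.delta[OF finite_idx_sub])
    also have "\<dots> = (if a = 0 \<and> c = 0 then 1 else 0)" using Z_I[OF assms] by (auto simp: Z_def)
    finally show ?thesis .
  qed
  show ?thesis unfolding Csp_def using t s s1 s2 m by auto
qed



definition srt :: "nat list \<Rightarrow> nat list" where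
  "srt v = [min (v!0) (v!1), max (v!0) (v!1), min (v!2) (v!3), max (v!2) (v!3)]"

definition isX :: "nat list \<Rightarrow> bool" where
  "isX s \<longleftrightarrow> s!0 = s!1 \<and> s!2 = s!3 \<and> s!0 < s!2"

definition Piv :: "nat \<Rightarrow> nat list set" where
  "Piv k = {s\<in>I k. s!0 \<le> s!1 \<and> s!2 \<le> s!3 \<and> \<not> isX s \<and> s \<noteq> Z}"

lemma srt4[simp]: "srt [a,b,c,d] = [min a b, max a b, min c d, max c d]"
  by (simp add: srt_def)
lemma isX4[simp]: "isX [a,b,c,d] \<longleftrightarrow> a = b \<and> c = d \<and> a < c"
  by (simp add: isX_def)

lemma srt_cases:
  assumes "v \<in> I k"
  shows "srt v \<in> Piv k \<or> isX (srt v) \<or> srt v = Z"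
  using assms by (auto elim!: idx4_cases simp: Piv_def)

lemma srt_Z: "v \<in> I k \<Longrightarrow> srt v = Z \<longleftrightarrow> v = Z"
  by (auto elim!: idx4_cases simp: Z_def min_def max_def split: if_splits)

lemma srt_Piv: assumes "v \<in> I k" shows "srt v \<in> Piv k \<longleftrightarrow> \<not> isX (srt v) \<and> v \<noteq> Z"
proof -
  obtain a b c d where vv: "v = [a,b,c,d]" "a<k" "b<k" "c<k" "d<k" using assms by (rule idx4_cases)
  have "srt v \<in> I k" "srt v ! 0 \<le> srt v ! 1" "srt v ! 2 \<le> srt v ! 3" using vv by auto
  then show ?thesis using srt_Z[OF assms] by (auto simp: Piv_def)
qed

lemma sym_srt:
  assumes v: "v \<in> I k" and s01: "\<forall>v\<in>I k. g (swap_idx 0 1 v) = g v"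
    and s23: "\<forall>v\<in>I k. g (swap_idx 2 3 v) = g v"
  shows "g v = g (srt v)"
proof -
  obtain a b c d where vv: "v = [a,b,c,d]" "a<k" "b<k" "c<k" "d<k" using v by (rule idx4_cases)
  have e1: "g [b,a,c,d] = g [a,b,c,d]" using s01 vv by (metis swap01 idx4_mem)
  have e2: "g [a,b,d,c] = g [a,b,c,d]" using s23 vv by (metis swap23 idx4_mem)
  have e3: "g [b,a,d,c] = g [b,a,c,d]" using s23 vv by (metis swap23 idx4_mem)
  show ?thesis using e1 e2 e3 vv(1) by (cases "a \<le> b"; cases "c \<le> d") (auto simp: min_def max_def)
qed

lemma piv_inj:
  assumes C: "Csp k 0 g" and z: "\<forall>p\<in>Piv k. g p = 0"
  shows "g = 0"
proof -
  from C have t: "g \<in> tensors k 4" and sm: "sum g (I k) = 0"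
    and s01: "\<forall>v\<in>I k. g (swap_idx 0 1 v) = g v" and s23: "\<forall>v\<in>I k. g (swap_idx 2 3 v) = g v"
    and ms: "\<forall>a<k. \<forall>c<k. Mm k g a c = Mm k g c a" unfolding Csp_def by auto
  have st1: "g v = 0" if "v \<in> I k" "srt v \<in> Piv k" for v
    using sym_srt[OF that(1) s01 s23] z that(2) by simp
  have st2: "g [a,a,c,c] = 0" if ac: "a < c" "c < k" for a c
  proof -
    have "Mm k g a c = (\<Sum>v\<in>{v\<in>I k. v!0 = a \<and> v!2 = c}. if v = [a,a,c,c] then g v else 0)"
      unfolding Mm_def
    proof (rule sum.cong[OF refl])
      fix v assume v: "v \<in> {v\<in>I k. v!0 = a \<and> v!2 = c}"
      show "g v = (if v = [a,a,c,c] then g v else 0)"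
      proof (cases "v = [a,a,c,c]")
        case False
        have "\<not> isX (srt v) \<and> v \<noteq> Z" using v False ac by (auto elim!: idx4_cases simp: Z_def min_def max_def split: if_splits)
        then have "srt v \<in> Piv k" using srt_Piv v by blast
        then show ?thesis using st1 v False by auto
      qed simp
    qed
    also have "\<dots> = g [a,a,c,c]" using ac by (subst sum.delta[OF finite_idx_sub]) simp
    finally have m1: "Mm k g a c = g [a,a,c,c]" .
    have "Mm k g c a = (\<Sum>v\<in>{v\<in>I k. v!0 = c \<and> v!2 = a}. 0)"
      unfolding Mm_def
    proof (rule sum.cong[OF refl])
      fix v assume v: "v \<in> {v\<in>I k. v!0 = c \<and> v!2 = a}"
      have "\<not> isX (srt v) \<and> v \<noteq> Z" using v ac by (auto elim!: idx4_cases simp: Z_def min_def max_def split: if_splits)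
      then have "srt v \<in> Piv k" using srt_Piv v by blast
      then show "g v = 0" using st1 v by auto
    qed
    then have m2: "Mm k g c a = 0" by simp
    show ?thesis using m1 m2 ms ac by auto
  qed
  have st3: "g v = 0" if v: "v \<in> I k" "v \<noteq> Z" for v
  proof -
    have "srt v \<noteq> Z" using srt_Z v by auto
    then consider "srt v \<in> Piv k" | "isX (srt v)" using srt_cases[OF v(1)] by blast
    then show ?thesis
    proof cases
      case 1 then show ?thesis using st1 v by auto
    next
      case 2
      obtain a b c d where vv: "v = [a,b,c,d]" "a<k" "b<k" "c<k" "d<k" using v(1) by (rule idx4_cases)
      have "g (srt v) = 0" using 2 vv st2 by (auto simp: min_def max_def split: if_splits)
      then show ?thesis using sym_srt[OF v(1) s01 s23] by simp
    qed
  qed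
  have st4: "g Z = 0"
  proof (cases "Z \<in> I k")
    case True
    have "0 = sum g (I k)" using sm by simp
    also have "\<dots> = (\<Sum>v\<in>I k. if v = Z then g v else 0)" by (rule sum.cong) (auto simp: st3)
    also have "\<dots> = g Z" using True finite_idx[of k 4] by simp
    finally show ?thesis by simp
  next
    case False then show ?thesis using t by (auto simp: tensors_def)
  qed
  show ?thesis
  proof
    fix v show "g v = 0 v"
      using t st3 st4 by (cases "v \<in> I k") (auto simp: tensors_def)
  qed
qed



definition xc :: "nat \<Rightarrow> (nat list \<Rightarrow> real) \<Rightarrow> nat list \<Rightarrow> real" where
  "xc k h v = (if v \<in> I k \<and> isX v then Mm k h (v!2) (v!0) - Mm k h (v!0) (v!2) else 0)"
definition zc :: "nat \<Rightarrow> (nat list \<Rightarrow> real) \<Rightarrow> real" where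
  "zc k h = - (\<Sum>v\<in>I k. h v + xc k h v)"
definition corr :: "nat \<Rightarrow> (nat list \<Rightarrow> real) \<Rightarrow> nat list \<Rightarrow> real" where
  "corr k h v = h v + xc k h v + zc k h * dZ v"
definition symI :: "nat \<Rightarrow> nat list \<Rightarrow> nat list \<Rightarrow> real" where
  "symI k p v = (if v \<in> I k \<and> srt v = p then 1 else 0)"
definition ee :: "nat \<Rightarrow> nat list \<Rightarrow> nat list \<Rightarrow> real" where
  "ee k p = corr k (symI k p)"

lemma Mm_xc: assumes "a < k" "c < k"
  shows "Mm k (xc k h) a c = (if a < c then Mm k h c a - Mm k h a c else 0)"
proof -
  have "Mm k (xc k h) a c = (\<Sum>v\<in>{v\<in>I k. v!0 = a \<and> v!2 = c}. if v = [a,a,c,c] then (if a < c then Mm k h c a - Mm k h a c else 0) else 0)"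
    unfolding Mm_def[of k "xc k h"]
  proof (rule sum.cong[OF refl])
    fix v assume v: "v \<in> {v\<in>I k. v!0 = a \<and> v!2 = c}"
    then obtain b d where "v = [a,b,c,d]" by (auto elim!: idx4_cases)
    then show "xc k h v = (if v = [a,a,c,c] then (if a < c then Mm k h c a - Mm k h a c else 0) else 0)"
      using v by (auto simp: xc_def)
  qed
  also have "\<dots> = (if a < c then Mm k h c a - Mm k h a c else 0)"
    using assms by (subst sum.delta[OF finite_idx_sub]) simp
  finally show ?thesis .
qed

lemma Mm_dZ: assumes "0 < k" shows "Mm k dZ a c = (if a = 0 \<and> c = 0 then 1 else 0)"
proof -
  have "Mm k dZ a c = (\<Sum>v\<in>{v\<in>I k. v!0 = a \<and> v!2 = c}. if v = Z then 1 else 0)"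
    by (simp add: Mm_def dZ_def)
  also have "\<dots> = (if Z \<in> {v\<in>I k. v!0 = a \<and> v!2 = c} then 1 else 0)"
    by (rule sum.delta[OF finite_idx_sub])
  also have "\<dots> = (if a = 0 \<and> c = 0 then 1 else 0)" using Z_I[OF assms] by (auto simp: Z_def)
  finally show ?thesis .
qed

lemma corr_Csp:
  assumes k: "0 < k" and t: "h \<in> tensors k 4"
    and s01: "\<forall>v\<in>I k. h (swap_idx 0 1 v) = h v" and s23: "\<forall>v\<in>I k. h (swap_idx 2 3 v) = h v"
  shows "Csp k 0 (corr k h)"
proof -
  have ceq: "corr k h = h + xc k h + fscale (zc k h) dZ"
    by (simp add: fun_eq_iff corr_def fscale_def)
  have tc: "corr k h \<in> tensors k 4"
    using t Z_I[OF k] by (auto simp: tensors_def corr_def xc_def dZ_def)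
  have sc: "sum (corr k h) (I k) = 0"
  proof -
    have "sum (corr k h) (I k) = (\<Sum>v\<in>I k. h v + xc k h v) + zc k h * sum dZ (I k)"
      by (simp add: corr_def sum.distrib sum_distrib_left)
    also have "sum dZ (I k) = 1" using Csp_dZ[OF k] by (simp add: Csp_def)
    finally show ?thesis by (simp add: zc_def)
  qed
  have x01: "xc k h (swap_idx 0 1 v) = xc k h v" and x23: "xc k h (swap_idx 2 3 v) = xc k h v"
    and z01: "dZ (swap_idx 0 1 v) = dZ v" and z23: "dZ (swap_idx 2 3 v) = dZ v" if "v \<in> I k" for v
    using that by (auto elim!: idx4_cases simp: xc_def dZ_def Z_def)
  have sy01: "\<forall>v\<in>I k. corr k h (swap_idx 0 1 v) = corr k h v"
    using s01 x01 z01 by (simp add: corr_def)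
  have sy23: "\<forall>v\<in>I k. corr k h (swap_idx 2 3 v) = corr k h v"
    using s23 x23 z23 by (simp add: corr_def)
  have mc: "Mm k (corr k h) a c = Mm k h a c + (if a < c then Mm k h c a - Mm k h a c else 0)
      + zc k h * (if a = 0 \<and> c = 0 then 1 else 0)" if "a < k" "c < k" for a c
    unfolding ceq Mm_add Mm_scale Mm_xc[OF that] Mm_dZ[OF k] by simp
  have ms: "\<forall>a<k. \<forall>c<k. Mm k (corr k h) a c = Mm k (corr k h) c a"
  proof (intro allI impI)
    fix a c assume ac: "a < k" "c < k"
    show "Mm k (corr k h) a c = Mm k (corr k h) c a"
      unfolding mc[OF ac] mc[OF ac(2,1)] by (cases "a < c"; cases "c < a") auto
  qed
  show ?thesis unfolding Csp_def using tc sc sy01 sy23 ms by blast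
qed

lemma symI_props:
  shows "symI k p \<in> tensors k 4" "\<forall>v\<in>I k. symI k p (swap_idx 0 1 v) = symI k p v"
    "\<forall>v\<in>I k. symI k p (swap_idx 2 3 v) = symI k p v"
  by (auto simp: tensors_def symI_def min.commute max.commute elim!: idx4_cases)

lemma ee_Csp: "0 < k \<Longrightarrow> Csp k 0 (ee k p)"
  unfolding ee_def using corr_Csp symI_props by blast

lemma ee_val: assumes "p \<in> Piv k" "q \<in> Piv k" shows "ee k p q = (if p = q then 1 else 0)"
proof -
  have q: "q \<in> I k" "\<not> isX q" "q \<noteq> Z" "q!0 \<le> q!1" "q!2 \<le> q!3" using assms(2) by (auto simp: Piv_def)
  then have "srt q = q" by (auto elim!: idx4_cases)
  then show ?thesis using q by (auto simp: ee_def corr_def xc_def dZ_def symI_def)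
qed



lemma dim_eq: assumes k: "0 < k"
  shows "fs.dim {p - q | p q. p \<in> model_space k 4 balanced4 \<and> q \<in> model_space k 4 balanced4} = card (Piv k)"
proof (rule pivot_dim[OF L_subspace, where e = "ee k"])
  show "finite (Piv k)" unfolding Piv_def by simp
  show "\<And>g. g \<in> {g. Csp k 0 g} \<Longrightarrow> \<forall>p\<in>Piv k. g p = 0 \<Longrightarrow> g = 0" using piv_inj by blast
  show "\<And>p. p \<in> Piv k \<Longrightarrow> ee k p \<in> {g. Csp k 0 g}" using ee_Csp[OF k] by blast
  show "\<And>p q. p \<in> Piv k \<Longrightarrow> q \<in> Piv k \<Longrightarrow> ee k p q = (if p = q then 1 else 0)" by (rule ee_val)
  show "{p - q | p q. p \<in> model_space k 4 balanced4 \<and> q \<in> model_space k 4 balanced4} \<subseteq> {g. Csp k 0 g}"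
    unfolding model_eq using Csp_diff[of k 1 _ 1] by auto
  show "ee k ` Piv k \<subseteq> {p - q | p q. p \<in> model_space k 4 balanced4 \<and> q \<in> model_space k 4 balanced4}"
  proof
    fix x assume "x \<in> ee k ` Piv k"
    then obtain p where x: "x = ee k p" by blast
    have "Csp k (0 + 1) (ee k p + dZ)" by (rule Csp_add[OF ee_Csp[OF k] Csp_dZ[OF k]])
    moreover have "x = (ee k p + dZ) - dZ" using x by simp
    ultimately have "x = (ee k p + dZ) - dZ \<and> Csp k 1 (ee k p + dZ) \<and> Csp k 1 dZ" using Csp_dZ[OF k] by simp
    then show "x \<in> {p - q | p q. p \<in> model_space k 4 balanced4 \<and> q \<in> model_space k 4 balanced4}"
      unfolding model_eq by blast
  qed
qed

lemma choose2_Suc: "Suc n choose 2 = n + (n choose 2)"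
  by (simp add: numeral_2_eq_2)

lemma choose2_real: "real (n choose 2) = real n * (real n - 1) / 2"
  by (induction n) (simp_all add: choose2_Suc algebra_simps)

definition Lt :: "nat \<Rightarrow> (nat \<times> nat) set" where "Lt k = {(a,c). a < c \<and> c < k}"
definition Pr :: "nat \<Rightarrow> (nat \<times> nat) set" where "Pr k = {(a,c). a \<le> c \<and> c < k}"

lemma Lt_fin: "finite (Lt k)" unfolding Lt_def by (rule finite_subset[of _ "{..<k} \<times> {..<k}"]) auto
lemma Pr_fin: "finite (Pr k)" unfolding Pr_def by (rule finite_subset[of _ "{..<k} \<times> {..<k}"]) auto

lemma card_Lt: "card (Lt k) = k choose 2"
proof (induction k)
  case 0 then show ?case by (simp add: Lt_def)
next
  case (Suc k)
  have e: "Lt (Suc k) = Lt k \<union> (\<lambda>a. (a,k)) ` {..<k}" by (auto simp: Lt_def)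
  have "card (Lt (Suc k)) = card (Lt k) + card ((\<lambda>a. (a,k)) ` {..<k})"
    unfolding e by (rule card_Un_disjoint) (simp add: Lt_fin, simp, auto simp: Lt_def)
  also have "card ((\<lambda>a. (a,k)) ` {..<k}) = k" by (subst card_image) (auto simp: inj_on_def)
  finally show ?case using Suc choose2_Suc by simp
qed

lemma card_Pr: "card (Pr k) = Suc k choose 2"
proof (induction k)
  case 0 then show ?case by (simp add: Pr_def)
next
  case (Suc k)
  have e: "Pr (Suc k) = Pr k \<union> (\<lambda>a. (a,k)) ` {..k}" by (auto simp: Pr_def)
  have "card (Pr (Suc k)) = card (Pr k) + card ((\<lambda>a. (a,k)) ` {..k})"
    unfolding e by (rule card_Un_disjoint) (simp add: Pr_fin, simp, auto simp: Pr_def)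
  also have "card ((\<lambda>a. (a,k)) ` {..k}) = Suc k" by (subst card_image) (auto simp: inj_on_def)
  finally show ?case using Suc choose2_Suc[of "Suc k"] by simp
qed

lemma card_Piv: assumes k: "0 < k"
  shows "card (Piv k) + (k choose 2) + 1 = (Suc k choose 2)^2"
proof -
  define Srt where "Srt = {s\<in>I k. s!0 \<le> s!1 \<and> s!2 \<le> s!3}"
  define Xs where "Xs = {s\<in>I k. isX s}"
  have fS: "finite Srt" "finite Xs" "finite (Piv k)" unfolding Srt_def Xs_def Piv_def by simp_all
  have u: "Srt = (Piv k \<union> Xs) \<union> {Z}"
    using Z_I[OF k] by (auto simp: Srt_def Xs_def Piv_def isX_def Z_def)
  have "card Srt = card (Piv k \<union> Xs) + card {Z}"
    unfolding u by (rule card_Un_disjoint) (use fS in \<open>auto simp: Xs_def Piv_def isX_def Z_def\<close>)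
  also have "card (Piv k \<union> Xs) = card (Piv k) + card Xs"
    by (rule card_Un_disjoint) (use fS in \<open>auto simp: Xs_def Piv_def\<close>)
  finally have c1: "card Srt = card (Piv k) + card Xs + 1" by simp
  have "Xs = (\<lambda>(a,c). [a,a,c,c]) ` Lt k"
    by (auto simp: Xs_def Lt_def image_iff elim!: idx4_cases)
  moreover have "inj_on (\<lambda>(a,c). [a,a,c,c]) (Lt k)" by (auto simp: inj_on_def)
  ultimately have c2: "card Xs = k choose 2"
    by (simp add: card_image card_Lt)
  have "Srt = (\<lambda>((a,b),(c,d)). [a,b,c,d]) ` (Pr k \<times> Pr k)"
    by (auto simp: Srt_def Pr_def image_iff elim!: idx4_cases)
  moreover have "inj_on (\<lambda>((a,b),(c,d)). [a,b,c,d]) (Pr k \<times> Pr k)" by (auto simp: inj_on_def)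
  ultimately have "card Srt = card (Pr k \<times> Pr k)"
    by (simp add: card_image)
  then have c3: "card Srt = (Suc k choose 2)^2"
    by (simp add: card_cartesian_product card_Pr power2_eq_square)
  show ?thesis using c1 c2 c3 by simp
qed



theorem mainTheorem9:
  fixes k :: nat
  assumes "k \<ge> 2"
  shows "real (d_kappa k 4 balanced4)
           = ((real k ^ 2 + real k) / 2) ^ 2 - real (k choose 2) - 1
       \<and> real (d_kappa k 4 balanced4)
           = real k * (real k ^ 3 + 2 * real k ^ 2 - real k + 2) / 4 - 1
       \<and> real (d_kappa k 4 balanced4) \<noteq> (real k ^ 4 + real k) / 2 - 1"
proof -
  have k: "0 < k" using assms by simp
  have d: "d_kappa k 4 balanced4 = card (Piv k)"
    unfolding d_kappa_def affine_dim_def using dim_eq[OF k] by simp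
  have c1: "real (Suc k choose 2) = (real k ^ 2 + real k) / 2"
    using choose2_real[of "Suc k"] by (simp add: algebra_simps power2_eq_square)
  have "real (card (Piv k)) + real (k choose 2) + 1 = (real (Suc k choose 2))^2"
    using arg_cong[OF card_Piv[OF k], of real] by simp
  then have e1: "real (d_kappa k 4 balanced4) = ((real k ^ 2 + real k) / 2) ^ 2 - real (k choose 2) - 1"
    unfolding d c1 by simp
  have e2: "real (d_kappa k 4 balanced4) = real k * (real k ^ 3 + 2 * real k ^ 2 - real k + 2) / 4 - 1"
    unfolding e1 choose2_real by (simp add: field_simps power2_eq_square power3_eq_cube power4_eq_xxxx)
  have "real k * (real k ^ 3 + 2 * real k ^ 2 - real k + 2) / 4 - 1 - ((real k ^ 4 + real k) / 2 - 1)
     = - ((real k * (real k - 1)) ^ 2) / 4"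
    by (simp add: field_simps power2_eq_square power3_eq_cube power4_eq_xxxx)
  moreover have "real k * (real k - 1) > 0" using assms by simp
  then have "(real k * (real k - 1)) ^ 2 > 0" by (rule zero_less_power)
  ultimately have "real k * (real k ^ 3 + 2 * real k ^ 2 - real k + 2) / 4 - 1 \<noteq> (real k ^ 4 + real k) / 2 - 1"
    by linarith
  then show ?thesis using e1 e2 by simp
qed

end
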